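(* Let $d\in\mathbb{N}$ and let $f\in\mathbb{R}[x]$ be a univariate polynomial of degree at most $d$ that is positive on $[-1,1]$, with minimum and maximum values $0<f_{\min}<f_{\max}$ on $[-1,1]$. Let $r\in\mathbb{N}$, $r\ge2$, satisfy \[ \frac{r}{\log r}\ge 10\sqrt{35}\left(1+\tfrac{1}{\sqrt2}\right)d^{5/2}\quad\text{and}\quad \frac{r}{\log r}\ge 150\,d^{5/2}\frac{f_{\max}}{f_{\min}}. \] Then $f+\epsilon\in\mathcal Q(1-x^2)_{2t}$, where $t=O(r)$ and $\epsilon=O(\|f\|_{1,\mathrm{cheb}}\log(r)/r^2)$. In particular, one may take \[ t=104r,\qquad \epsilon=\left(\tfrac72 d^{9/2}+14\right)\|f\|_{1,\mathrm{cheb}}\,\frac{\log r}{r^2}. \]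
   Context: $\Sigma[x]_r$ is the cone of sums of squares of univariate polynomials of degree at most $r$, and $\mathcal Q(1-x^2)_r=\Sigma[x]_r+(1-x^2)\Sigma[x]_{r-2}$. $T_k(x)=\cos(k\arccos x)$ is the Chebyshev polynomial of the first kind; for $p=\sum_k c_kT_k$, $\|p\|_{1,\mathrm{cheb}}=\sum_k|c_k|$. $\log$ is the natural logarithm. *)

theory Defs
  imports "HOL-Analysis.Analysis" "HOL-Computational_Algebra.Polynomial"
begin

definition sos_deg :: "nat \<Rightarrow> real poly set" where
  "sos_deg r = {p. \<exists>qs. p = sum_list (map (\<lambda>q. q ^ 2) qs) \<and> degree p \<le> r}"

definition qmodule_deg :: "nat \<Rightarrow> real poly set" where
  "qmodule_deg r = {s0 + [:1, 0, -1:] * s1 | s0 s1. s0 \<in> sos_deg r \<and> s1 \<in> sos_deg (r - 2)}"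

fun cheb :: "nat \<Rightarrow> real poly" where
  "cheb 0 = 1"
| "cheb (Suc 0) = [:0, 1:]"
| "cheb (Suc (Suc k)) = [:0, 2:] * cheb (Suc k) - cheb k"

definition cheb_coeff :: "real poly \<Rightarrow> nat \<Rightarrow> real" where
  "cheb_coeff p = (THE c. (\<forall>k>degree p. c k = 0) \<and>
                          p = (\<Sum>k\<le>degree p. smult (c k) (cheb k)))"

definition cheb_norm1 :: "real poly \<Rightarrow> real" where
  "cheb_norm1 p = (\<Sum>k\<le>degree p. \<bar>cheb_coeff p k\<bar>)"

end

theory Submission
  imports Defs "HOL-Computational_Algebra.Fundamental_Theorem_Algebra"
begin

definition sos :: "real poly set" where
  "sos = {p. \<exists>qs. p = sum_list (map (\<lambda>q. q ^ 2) qs)}"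

lemma sos_0: "0 \<in> sos" unfolding sos_def by (rule CollectI, rule exI[of _ "[]"]) simp
lemma sos_sq: "q^2 \<in> sos" unfolding sos_def by (rule CollectI, rule exI[of _ "[q]"]) simp
lemma sos_add: "a \<in> sos \<Longrightarrow> b \<in> sos \<Longrightarrow> a + b \<in> sos"
proof -
  assume "a \<in> sos" "b \<in> sos"
  then obtain as bs where "a = sum_list (map (\<lambda>q. q ^ 2) as)" "b = sum_list (map (\<lambda>q. q ^ 2) bs)"
    unfolding sos_def by auto
  then have "a + b = sum_list (map (\<lambda>q. q ^ 2) (as @ bs))" by simp
  then show ?thesis unfolding sos_def by blast
qed

lemma sum_sq_mult: "(q::real poly)^2 * sum_list (map (\<lambda>q. q ^ 2) bs) = sum_list (map (\<lambda>q. q ^ 2) (map (\<lambda>b. q*b) bs))"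
  by (induction bs) (simp_all add: algebra_simps power_mult_distrib)

lemma sos_mult: "a \<in> sos \<Longrightarrow> b \<in> sos \<Longrightarrow> a * b \<in> sos"
proof -
  assume "a \<in> sos" "b \<in> sos"
  then obtain as bs where a: "a = sum_list (map (\<lambda>q. q ^ 2) as)" and b: "b = sum_list (map (\<lambda>q. q ^ 2) bs)"
    unfolding sos_def by auto
  have "a * b \<in> sos" unfolding a
  proof (induction as)
    case Nil then show ?case using sos_0 by simp
  next
    case (Cons q as)
    have "(sum_list (map (\<lambda>q. q ^ 2) (q # as))) * b = q^2 * b + sum_list (map (\<lambda>q. q ^ 2) as) * b"
      by (simp add: algebra_simps)
    moreover have "q^2 * b \<in> sos" unfolding b sum_sq_mult sos_def by blast
    ultimately show ?case using Cons sos_add b by simp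
  qed
  then show ?thesis .
qed

lemma sos_const: "c \<ge> 0 \<Longrightarrow> [:c:] \<in> sos"
proof -
  assume "c \<ge> 0"
  then have "[:c:] = [:sqrt c:]^2" by (simp add: power2_eq_square)
  then show ?thesis using sos_sq by metis
qed

abbreviation gg :: "real poly" where "gg \<equiv> [:1, 0, -1:]"

definition Qs :: "nat \<Rightarrow> real poly set" where
  "Qs D = {p. \<exists>s0 s1. s0 \<in> sos \<and> s1 \<in> sos \<and> p = s0 + gg * s1 \<and> degree s0 \<le> D \<and> degree (gg * s1) \<le> D}"

lemma Qs_mono: "p \<in> Qs D \<Longrightarrow> D \<le> E \<Longrightarrow> p \<in> Qs E"
  unfolding Qs_def by force

lemma ring_aux: "(s0 + g * s1) * (t0 + g * t1) = (s0 * t0 + g^2 * (s1 * t1)) + g * (s0 * t1 + s1 * t0)" for s0 :: "'a::comm_ring_1"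
  by (simp add: algebra_simps power2_eq_square)

lemma Qs_mult:
  assumes "p \<in> Qs D" "q \<in> Qs E" shows "p * q \<in> Qs (D + E)"
proof -
  obtain s0 s1 where s: "s0 \<in> sos" "s1 \<in> sos" "p = s0 + gg * s1" "degree s0 \<le> D" "degree (gg * s1) \<le> D"
    using assms(1) unfolding Qs_def by blast
  obtain t0 t1 where t: "t0 \<in> sos" "t1 \<in> sos" "q = t0 + gg * t1" "degree t0 \<le> E" "degree (gg * t1) \<le> E"
    using assms(2) unfolding Qs_def by blast
  define a where "a = s0 * t0 + gg^2 * (s1 * t1)"
  define b where "b = s0 * t1 + s1 * t0"
  have eq: "p * q = a + gg * b" unfolding a_def b_def s(3) t(3) by (rule ring_aux)
  have a: "a \<in> sos" unfolding a_def using s t by (intro sos_add sos_mult sos_sq)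
  have b: "b \<in> sos" unfolding b_def using s t by (intro sos_add sos_mult)
  have a2: "a = s0 * t0 + (gg * s1) * (gg * t1)" unfolding a_def by (simp only: power2_eq_square mult_ac)
  have "degree (s0 * t0) \<le> D + E" using s t degree_mult_le[of s0 t0] by linarith
  moreover have "degree ((gg * s1) * (gg * t1)) \<le> D + E" using s t degree_mult_le[of "gg * s1" "gg * t1"] by linarith
  ultimately have da: "degree a \<le> D + E" unfolding a2 using degree_add_le by blast
  have b2: "gg * b = s0 * (gg * t1) + (gg * s1) * t0" unfolding b_def by (simp add: algebra_simps)
  have "degree (s0 * (gg * t1)) \<le> D + E" using s t degree_mult_le[of s0 "gg * t1"] by linarith
  moreover have "degree ((gg * s1) * t0) \<le> D + E" using s t degree_mult_le[of "gg * s1" t0] by linarith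
  ultimately have db: "degree (gg * b) \<le> D + E" unfolding b2 using degree_add_le by blast
  show ?thesis unfolding Qs_def using eq a b da db by blast
qed

lemma Qs_const: "c > 0 \<Longrightarrow> [:c:] \<in> Qs 0"
  unfolding Qs_def using sos_const[of c] sos_0 by (intro CollectI exI[of _ "[:c:]"] exI[of _ 0]) auto

lemma Qs_lin1: "a \<ge> 1 \<Longrightarrow> [:a, -1:] \<in> Qs 2"
proof -
  assume a: "a \<ge> 1"
  have eq: "[:a, -1:] = ([:a - 1:] + [:sqrt (1/2), - sqrt (1/2):]^2) + gg * [:1/2:]"
    by (simp add: power2_eq_square real_sqrt_mult[symmetric])
  have "[:a - 1:] + [:sqrt (1/2), - sqrt (1/2):]^2 \<in> sos" using a by (intro sos_add sos_const sos_sq) auto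
  moreover have "[:1/2:] \<in> sos" by (rule sos_const) auto
  moreover have "degree ([:a - 1:] + [:sqrt (1/2), - sqrt (1/2):]^2) \<le> 2"
    by (rule order.trans[OF degree_add_le]) (auto simp: power2_eq_square intro: order.trans[OF degree_mult_le])
  moreover have "degree (gg * [:1/2:]) \<le> 2" by simp
  ultimately show ?thesis unfolding Qs_def using eq by blast
qed

lemma Qs_lin2: "a \<le> -1 \<Longrightarrow> [:-a, 1:] \<in> Qs 2"
proof -
  assume a: "a \<le> -1"
  have eq: "[:-a, 1:] = ([:-a - 1:] + [:sqrt (1/2), sqrt (1/2):]^2) + gg * [:1/2:]"
    by (simp add: power2_eq_square real_sqrt_mult[symmetric])
  have "[:-a - 1:] + [:sqrt (1/2), sqrt (1/2):]^2 \<in> sos" using a by (intro sos_add sos_const sos_sq) auto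
  moreover have "[:1/2:] \<in> sos" by (rule sos_const) auto
  moreover have "degree ([:-a - 1:] + [:sqrt (1/2), sqrt (1/2):]^2) \<le> 2"
    by (rule order.trans[OF degree_add_le]) (auto simp: power2_eq_square intro: order.trans[OF degree_mult_le])
  moreover have "degree (gg * [:1/2:]) \<le> 2" by simp
  ultimately show ?thesis unfolding Qs_def using eq by blast
qed

lemma Qs_quad: "[:u^2 + v^2, -2*u, 1:] \<in> Qs 2"
proof -
  have eq: "[:u^2 + v^2, -2*u, 1:] = ([:-u, 1:]^2 + [:v:]^2) + gg * 0"
    by (simp add: power2_eq_square)
  have "[:-u, 1:]^2 + [:v:]^2 \<in> sos" by (intro sos_add sos_sq)
  moreover have "degree ([:-u, 1:]^2 + [:v:]^2) \<le> 2"
    by (rule order.trans[OF degree_add_le]) (auto simp: power2_eq_square intro: order.trans[OF degree_mult_le])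
  ultimately show ?thesis unfolding Qs_def using eq sos_0 by fastforce
qed

lemma mp_add: "map_poly (of_real::real\<Rightarrow>complex) (p+q) = map_poly of_real p + map_poly of_real q"
  by (rule poly_eqI) (simp add: coeff_map_poly)
lemma mp_mult: "map_poly (of_real::real\<Rightarrow>complex) (p*q) = map_poly of_real p * map_poly of_real q"
  by (rule poly_eqI) (simp add: coeff_map_poly coeff_mult)
lemma mp_poly: "poly (map_poly (of_real::real\<Rightarrow>complex) p) (of_real x) = of_real (poly p x)"
  by (induction p) (simp_all add: map_poly_pCons)

lemma pos_Qs:
  "\<And>p. degree p = n \<Longrightarrow> (\<forall>x\<in>{-1..1}. poly p x > 0) \<Longrightarrow> p \<in> Qs (2*n)"
proof (induction n rule: less_induct)
  case (less n p)
  note IH = less.IH and deg = less.prems(1) and pos = less.prems(2)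
  have p0: "p \<noteq> 0" using pos by force
  show ?case
  proof (cases "n = 0")
    case True
    then obtain c where c: "p = [:c:]" using deg degree_eq_zeroE by blast
    have "c > 0" using pos c by force
    then show ?thesis using Qs_const c Qs_mono by blast
  next
    case False
    show ?thesis
    proof (cases "\<exists>a. poly p a = 0")
      case True
      then obtain a where a: "poly p a = 0" by blast
      then obtain q where q: "p = [:-a, 1:] * q" using poly_eq_0_iff_dvd by (metis dvdE)
      have q0: "q \<noteq> 0" using p0 q by auto
      have "degree p = 1 + degree q" unfolding q by (subst degree_mult_eq) (use q0 in auto)
      then have dq: "degree q = n - 1" using deg by simp
      have pq: "poly p x = (x - a) * poly q x" for x unfolding q poly_mult by (simp add: algebra_simps)
      have aout: "a > 1 \<or> a < -1"
      proof (rule ccontr)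
        assume "\<not> (a > 1 \<or> a < -1)"
        then have "a \<in> {-1..1}" by auto
        then show False using pos a by fastforce
      qed
      then show ?thesis
      proof
        assume a1: "a > 1"
        have "poly (-q) x > 0" if "x \<in> {-1..1}" for x
        proof -
          have "(x - a) * poly q x > 0" using pos that pq by auto
          moreover have "x - a < 0" using that a1 by auto
          ultimately show ?thesis by (simp add: mult_less_0_iff zero_less_mult_iff)
        qed
        then have B: "-q \<in> Qs (2*(n-1))" using IH[of "n-1" "-q"] dq False by auto
        have peq: "p = [:a, -1:] * (-q)" using q by simp
        have A: "[:a, -1:] \<in> Qs 2" using a1 Qs_lin1 by simp
        have "p \<in> Qs (2 + 2*(n-1))" unfolding peq by (rule Qs_mult[OF A B])
        moreover have "2 + 2*(n-1) = 2*n" using False by simp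
        ultimately show ?thesis by simp
      next
        assume a1: "a < -1"
        have "poly q x > 0" if "x \<in> {-1..1}" for x
        proof -
          have "(x - a) * poly q x > 0" using pos that pq by auto
          moreover have "x - a > 0" using that a1 by auto
          ultimately show ?thesis by (simp add: zero_less_mult_iff)
        qed
        then have B: "q \<in> Qs (2*(n-1))" using IH[of "n-1" "q"] dq False by auto
        have A: "[:-a, 1:] \<in> Qs 2" using a1 Qs_lin2 by simp
        have "p \<in> Qs (2 + 2*(n-1))" unfolding q by (rule Qs_mult[OF A B])
        moreover have "2 + 2*(n-1) = 2*n" using False by simp
        ultimately show ?thesis by simp
      qed
    next
      case noroot: False
      define pc where "pc = map_poly (of_real::real\<Rightarrow>complex) p"
      have "degree pc = n" unfolding pc_def using deg by (simp add: degree_map_poly)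
      then have "\<not> constant (poly pc)" using False constant_degree by metis
      then obtain z where z: "poly pc z = 0" using fundamental_theorem_of_algebra by blast
      define u where "u = Re z"
      define v where "v = Im z"
      have v0: "v \<noteq> 0"
      proof
        assume "v = 0"
        then have "z = of_real u" unfolding u_def v_def by (simp add: complex_eq_iff)
        then have "poly p u = 0" using z mp_poly[of p u] unfolding pc_def by simp
        then show False using noroot by blast
      qed
      define h where "h = [:u^2 + v^2, -2*u, 1:]"
      have h0: "h \<noteq> 0" unfolding h_def by simp
      have dh: "degree h = 2" unfolding h_def by simp
      have hpos: "poly h x > 0" for x
      proof -
        have "poly h x = (x - u)^2 + v^2" unfolding h_def by (simp add: algebra_simps power2_eq_square)
        then show ?thesis using v0 by (simp add: add_nonneg_pos)
      qed
      have hz: "poly (map_poly of_real h) z = 0"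
        unfolding h_def u_def v_def
        by (simp add: map_poly_pCons complex_eq_iff power2_eq_square algebra_simps)
      define q where "q = p div h"
      define r where "r = p mod h"
      have pqr: "p = h * q + r" unfolding q_def r_def by simp
      have "degree r < 2"
      proof (cases "r = 0")
        case False
        then show ?thesis using degree_mod_less'[OF h0] dh unfolding r_def by auto
      qed simp
      then have dr: "degree r \<le> 1" by simp
      have rz: "poly (map_poly of_real r) z = 0"
      proof -
        have "pc = map_poly of_real h * map_poly of_real q + map_poly of_real r"
          unfolding pc_def by (subst pqr) (simp add: mp_add mp_mult)
        then show ?thesis using z hz by simp
      qed
      have rexp: "r = [:coeff r 0, coeff r 1:]"
        using dr by (intro poly_eqI) (auto simp: coeff_pCons split: nat.splits intro!: coeff_eq_0)
      have "of_real (coeff r 0) + of_real (coeff r 1) * z = 0"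
        using rz by (subst (asm) rexp) (simp add: map_poly_pCons mult.commute)
      then have "coeff r 1 * v = 0" "coeff r 0 + coeff r 1 * u = 0"
        unfolding u_def v_def by (simp_all add: complex_eq_iff)
      then have "coeff r 1 = 0" "coeff r 0 = 0" using v0 by auto
      then have r0: "r = 0" using rexp by simp
      have pq: "p = h * q" using pqr r0 by simp
      have q0: "q \<noteq> 0" using p0 pq by auto
      have dq: "degree q = n - 2" and n2: "n \<ge> 2" using deg pq q0 h0 dh by (auto simp: degree_mult_eq)
      have "poly q x > 0" if "x \<in> {-1..1}" for x
      proof -
        have "poly h x * poly q x > 0" using pos that pq by (metis poly_mult)
        then show ?thesis using hpos[of x] by (simp add: zero_less_mult_iff)
      qed
      then have B: "q \<in> Qs (2*(n-2))" using IH[of "n-2" "q"] dq n2 by auto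
      have A: "h \<in> Qs 2" unfolding h_def by (rule Qs_quad)
      have "p \<in> Qs (2 + 2*(n-2))" unfolding pq by (rule Qs_mult[OF A B])
      then show ?thesis by (rule Qs_mono) (use n2 in auto)
    qed
  qed
qed

lemma Qs_qmod: assumes "p \<in> Qs D" "D \<le> N" shows "p \<in> qmodule_deg N"
proof -
  obtain s0 s1 where s: "s0 \<in> sos" "s1 \<in> sos" "p = s0 + gg * s1" "degree s0 \<le> D" "degree (gg * s1) \<le> D"
    using assms(1) unfolding Qs_def by blast
  have "degree s1 \<le> N - 2"
  proof (cases "s1 = 0")
    case False
    then have "degree (gg * s1) = 2 + degree s1" by (subst degree_mult_eq) auto
    then show ?thesis using s(5) assms(2) by linarith
  qed simp
  then have "s1 \<in> sos_deg (N - 2)" using s(2) unfolding sos_def sos_deg_def by blast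
  moreover have "s0 \<in> sos_deg N" using s(1,4) assms(2) unfolding sos_def sos_deg_def by auto
  ultimately show ?thesis unfolding qmodule_deg_def using s(3) by blast
qed

lemma d_le_r:
  fixes d r :: nat
  assumes "r \<ge> 2"
    and "real r / ln (real r) \<ge> 10 * sqrt 35 * (1 + 1 / sqrt 2) * real d powr (5/2)"
  shows "d \<le> r"
proof (cases "d = 0")
  case False
  then have d1: "real d \<ge> 1" by simp
  have "real d = real d powr 1" using d1 by simp
  also have "\<dots> \<le> real d powr (5/2)" using d1 by (intro powr_mono) auto
  finally have dd: "real d \<le> real d powr (5/2)" .
  have C: "10 \<le> 10 * sqrt 35 * (1 + 1 / sqrt 2)"
  proof -
    have "1 \<le> sqrt 35" by simp
    moreover have "1 \<le> 1 + 1 / sqrt (2::real)" by simp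
    ultimately have "1 \<le> sqrt 35 * (1 + 1 / sqrt (2::real))" by (metis mult_mono' mult_1 zero_le_one)
    then show ?thesis by simp
  qed
  have "10 * real d \<le> 10 * sqrt 35 * (1 + 1 / sqrt 2) * real d powr (5/2)"
    using C dd by (intro mult_mono) auto
  also have "\<dots> \<le> real r / ln (real r)" by (rule assms(2))
  also have "\<dots> \<le> real r / (2/3)"
  proof -
    have "ln 2 \<le> ln (real r)" using assms(1) by simp
    then have "2/3 \<le> ln (real r)" using ln2_ge_two_thirds by linarith
    then show ?thesis by (intro divide_left_mono) auto
  qed
  finally show ?thesis by simp
qed simp

theorem theorem6:
  fixes d r :: nat and f :: "real poly" and fmin fmax :: real
  assumes "degree f \<le> d"
    and "\<forall>x\<in>{-1..1}. poly f x > 0"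
    and "fmin = (INF x\<in>{-1..1}. poly f x)"
    and "fmax = (SUP x\<in>{-1..1}. poly f x)"
    and "0 < fmin" and "fmin < fmax"
    and "r \<ge> 2"
    and "real r / ln (real r) \<ge> 10 * sqrt 35 * (1 + 1 / sqrt 2) * real d powr (5/2)"
    and "real r / ln (real r) \<ge> 150 * real d powr (5/2) * (fmax / fmin)"
  shows "f + [: (7/2 * real d powr (9/2) + 14) * cheb_norm1 f * ln (real r) / (real r)^2 :]
           \<in> qmodule_deg (2 * (104 * r))"
proof -
  define c where "c = (7/2 * real d powr (9/2) + 14) * cheb_norm1 f * ln (real r) / (real r)^2"
  have "cheb_norm1 f \<ge> 0" unfolding cheb_norm1_def by (intro sum_nonneg) auto
  moreover have "ln (real r) \<ge> 0" using assms(7) by simp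
  ultimately have c0: "c \<ge> 0" unfolding c_def by (intro divide_nonneg_pos mult_nonneg_nonneg add_nonneg_nonneg) (use assms(7) in auto)
  define F where "F = f + [:c:]"
  have pos: "\<forall>x\<in>{-1..1}. poly F x > 0" using assms(2) c0 unfolding F_def by (auto intro: add_pos_nonneg)
  have dF: "degree F \<le> d" unfolding F_def by (rule order.trans[OF degree_add_le]) (use assms(1) in auto)
  have "F \<in> Qs (2 * degree F)" using pos_Qs pos by blast
  moreover have "d \<le> r" using d_le_r assms(7,8) by blast
  ultimately have "F \<in> qmodule_deg (2 * (104 * r))" using dF by (intro Qs_qmod) auto
  then show ?thesis unfolding F_def c_def .
qed

end
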